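(* The forcing notion $\mathbb{P}$ defined below satisfies the countable chain condition.
   Context: For $n\in\omega$, $2^n$ is the set of $0$-$1$ sequences of length $n$, with metric $d(\eta,\eta')=2^{-k}$ for $\eta\ne\eta'$, where $k$ is least with $\eta\restriction k\neq\eta'\restriction k$. Let $\mathbb{L}_1(n)$ be the set of all $1$-Lipschitz functions $g\colon 2^n\to 2^n$. For a set $A$, $[A]^2$ denotes the set of $2$-element subsets of $A$, and $[A]^{<\omega}$ the finite subsets; $\rho(\alpha,\beta)$ means $\rho(\{\alpha,\beta\})$. A condition $p\in\mathbb{P}$ is a tuple $p=(n^p,s^p,v^p,\mathcal{F}^p,\gamma^p,\rho^p)$ such that: (1) $n^p\in\omega$, $s^p\in[\omega]^{<\omega}$, $v^p\in[\omega_1]^{<\omega}$; (2) $\mathcal{F}^p=\{f^p_i: i\in s^p\}\subseteq\mathbb{L}_1(n^p)$ and $\rho^p\colon[v^p]^2\to s^p$; (2') $\rho^p(\alpha,\beta)\neq\rho^p(\alpha',\beta)$ whenever $\alpha<\alpha'<\beta$; (3) $\gamma^p\colon v^p\to 2^{n^p}$ is one-to-one; (4) $\gamma^p(\alpha)=f^p_{\rho^p(\alpha,\beta)}(\gamma^p(\beta))$ whenever $\alpha<\beta$ are in $v^p$. The order: $p\le q$ ($q$ is stronger) iff (5) $n^p\le n^q$, $s^p\subseteq s^q$, $v^p\subseteq v^q$; (6) $f^q_i(\eta)\restriction n^p=f^p_i(\eta\restriction n^p)$ for each $i\in s^p$ and every $\eta\in 2^{n^q}$; (7) $\gamma^q(\alpha)\restriction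 n^p=\gamma^p(\alpha)$ for every $\alpha\in v^p$; (8) $\rho^q\restriction[v^p]^2=\rho^p$. *)

theory Defs
  imports Complex_Main "HOL-Library.Countable_Set"
begin

definition seq_dist :: "bool list \<Rightarrow> bool list \<Rightarrow> real" where
  "seq_dist x y = (if x = y then 0 else (1/2) ^ (LEAST k. take k x \<noteq> take k y))"

definition twoN :: "nat \<Rightarrow> bool list set" where
  "twoN n = {x. length x = n}"

definition Lip1 :: "nat \<Rightarrow> (bool list \<Rightarrow> bool list) \<Rightarrow> bool" where
  "Lip1 n g \<longleftrightarrow> (\<forall>x\<in>twoN n. g x \<in> twoN n) \<and>
     (\<forall>x\<in>twoN n. \<forall>y\<in>twoN n. seq_dist (g x) (g y) \<le> seq_dist x y)"

text \<open>F i is f_i; rho is applied to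
  two-element sets, rho(alpha,beta) = rho {alpha,beta}.  The components are
  normalised (default values) outside their intended domains so that each
  mathematical condition has a unique representation.\<close>
record 'a cond =
  cn :: nat
  cs :: "nat set"
  cv :: "'a set"
  cF :: "nat \<Rightarrow> bool list \<Rightarrow> bool list"
  cgam :: "'a \<Rightarrow> bool list"
  crho :: "'a set \<Rightarrow> nat"

definition is_cond :: "('a::linorder) cond \<Rightarrow> bool" where
  "is_cond p \<longleftrightarrow>
     finite (cs p) \<and> finite (cv p) \<and>
     (\<forall>i\<in>cs p. Lip1 (cn p) (cF p i)) \<and>
     (\<forall>a\<in>cv p. \<forall>b\<in>cv p. a \<noteq> b \<longrightarrow> crho p {a, b} \<in> cs p) \<and>
     (\<forall>a\<in>cv p. \<forall>a'\<in>cv p. \<forall>b\<in>cv p. a < a' \<and> a' < b \<longrightarrow> crho p {a, b} \<noteq> crho p {a', b}) \<and>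
     (\<forall>a\<in>cv p. cgam p a \<in> twoN (cn p)) \<and> inj_on (cgam p) (cv p) \<and>
     (\<forall>a\<in>cv p. \<forall>b\<in>cv p. a < b \<longrightarrow> cgam p a = cF p (crho p {a, b}) (cgam p b)) \<and>
     \<comment> \<open>normalisation outside the domains\<close>
     (\<forall>i. i \<notin> cs p \<longrightarrow> cF p i = (\<lambda>_. [])) \<and>
     (\<forall>i\<in>cs p. \<forall>x. x \<notin> twoN (cn p) \<longrightarrow> cF p i x = []) \<and>
     (\<forall>a. a \<notin> cv p \<longrightarrow> cgam p a = []) \<and>
     (\<forall>e. (\<not> (\<exists>a\<in>cv p. \<exists>b\<in>cv p. a \<noteq> b \<and> e = {a, b})) \<longrightarrow> crho p e = 0)"

text \<open>cond_le p q: q is stronger than p.\<close>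
definition cond_le :: "'a cond \<Rightarrow> 'a cond \<Rightarrow> bool" where
  "cond_le p q \<longleftrightarrow>
     cn p \<le> cn q \<and> cs p \<subseteq> cs q \<and> cv p \<subseteq> cv q \<and>
     (\<forall>i\<in>cs p. \<forall>x\<in>twoN (cn q). take (cn p) (cF q i x) = cF p i (take (cn p) x)) \<and>
     (\<forall>a\<in>cv p. take (cn p) (cgam q a) = cgam p a) \<and>
     (\<forall>a\<in>cv p. \<forall>b\<in>cv p. a \<noteq> b \<longrightarrow> crho q {a, b} = crho p {a, b})"

definition compatible :: "('a::linorder) cond \<Rightarrow> 'a cond \<Rightarrow> bool" where
  "compatible p q \<longleftrightarrow> (\<exists>r. is_cond r \<and> cond_le p r \<and> cond_le q r)"

definition antichain :: "('a::linorder) cond set \<Rightarrow> bool" where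
  "antichain A \<longleftrightarrow> A \<subseteq> {p. is_cond p} \<and>
     (\<forall>p\<in>A. \<forall>q\<in>A. p \<noteq> q \<longrightarrow> \<not> compatible p q)"

end

theory Submission
  imports Defs
begin


lemma sorted_mem_bounds:
  assumes "sorted_wrt (<) (xs::('a::linorder) list)" "x \<in> set xs"
  shows "hd xs \<le> x"
  using assms by (cases xs) auto

lemma sorted_wrt_tl0: "sorted_wrt R xs \<Longrightarrow> sorted_wrt R (tl xs)"
  by (cases xs) auto

lemma delta:
  fixes L :: "'b \<Rightarrow> ('a::linorder) list"
  assumes cnt: "\<forall>a::'a. countable {x. x < a}"
  shows "uncountable B \<Longrightarrow> (\<forall>p\<in>B. sorted_wrt (<) (L p) \<and> length (L p) = k) \<Longrightarrow>
     \<exists>p\<in>B. \<exists>q\<in>B. p \<noteq> q \<and> (\<exists>m. take m (L p) = take m (L q) \<and>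
        set (drop m (L p)) \<inter> set (drop m (L q)) = {})"
proof (induction k arbitrary: B L)
  case 0
  obtain p where p: "p \<in> B" using 0(1) uncountable_infinite by fastforce
  have "B - {p} \<noteq> {}"
  proof
    assume "B - {p} = {}" then have "B \<subseteq> {p}" by blast
    then show False using 0(1) countable_subset by (metis countable_finite finite.emptyI finite_insert)
  qed
  then obtain q where "q \<in> B" "q \<noteq> p" by blast
  then show ?case using p 0(2) by (metis drop0 take0 empty_set inf_bot_left length_0_conv)
next
  case (Suc k)
  show ?case
  proof (cases "\<exists>a. uncountable {p\<in>B. hd (L p) = a}")
    case True
    then obtain a where a: "uncountable {p\<in>B. hd (L p) = a}" by blast
    have "\<forall>p\<in>{p\<in>B. hd (L p) = a}. sorted_wrt (<) (tl (L p)) \<and> length (tl (L p)) = k"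
      using Suc(3) by (auto simp: sorted_wrt_tl0)
    from Suc(1)[OF a this] obtain p q m where pq: "p \<in> B" "hd (L p) = a" "q \<in> B" "hd (L q) = a" "p \<noteq> q"
      "take m (tl (L p)) = take m (tl (L q))" "set (drop m (tl (L p))) \<inter> set (drop m (tl (L q))) = {}"
      by auto
    have ne: "L p \<noteq> []" "L q \<noteq> []" using Suc(3) pq by fastforce+
    have "take (Suc m) (L p) = take (Suc m) (L q)"
      using ne pq by (metis list.collapse take_Suc_Cons)
    moreover have "set (drop (Suc m) (L p)) \<inter> set (drop (Suc m) (L q)) = {}"
      using pq by (simp add: drop_Suc)
    ultimately show ?thesis using pq by blast
  next
    case False
    then have fc: "\<And>a. countable {p\<in>B. hd (L p) = a}" by blast
    obtain p0 where p0: "p0 \<in> B" using Suc(2) uncountable_infinite by fastforce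
    define M where "M = Max (set (L p0))"
    have "{p\<in>B. hd (L p) \<le> M} = (\<Union>a\<in>insert M {x. x < M}. {p\<in>B. hd (L p) = a})"
      by (auto simp: order_le_less)
    then have cS: "countable {p\<in>B. hd (L p) \<le> M}" using fc cnt by simp
    have "B - {p\<in>B. hd (L p) \<le> M} \<noteq> {}"
    proof
      assume "B - {p\<in>B. hd (L p) \<le> M} = {}"
      then have "B \<subseteq> {p\<in>B. hd (L p) \<le> M}" by blast
      then show False using cS Suc(2) countable_subset by blast
    qed
    then obtain q where q: "q \<in> B" "\<not> hd (L q) \<le> M" by blast
    have ne: "L p0 \<noteq> []" "L q \<noteq> []" using Suc(3) p0 q by fastforce+
    have "hd (L p0) \<le> M" unfolding M_def using ne by (simp add: hd_in_set)
    then have "q \<noteq> p0" using q by blast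
    moreover have "set (L p0) \<inter> set (L q) = {}"
    proof (rule ccontr)
      assume "set (L p0) \<inter> set (L q) \<noteq> {}"
      then obtain x where x: "x \<in> set (L p0)" "x \<in> set (L q)" by blast
      have "x \<le> M" unfolding M_def using x by simp
      moreover have "hd (L q) \<le> x" using sorted_mem_bounds Suc(3) q x by blast
      ultimately show False using q by simp
    qed
    ultimately show ?thesis using p0 q by (metis drop0 take0)
  qed
qed


lemma seq_dist_nonneg: "0 \<le> seq_dist x y"
  by (simp add: seq_dist_def)

lemma seq_dist_lower:
  assumes "length x = n" "length y = n" "x \<noteq> y"
  shows "(1/2::real)^n \<le> seq_dist x y"
proof -
  have "take n x \<noteq> take n y" using assms by simp
  then have "(LEAST k. take k x \<noteq> take k y) \<le> n" by (rule Least_le)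
  then show ?thesis using assms by (simp add: seq_dist_def power_decreasing)
qed

lemma seq_dist_snoc_ne:
  assumes "length x = n" "length y = n" "x \<noteq> y"
  shows "seq_dist (x@[b]) (y@[c]) = seq_dist x y"
proof -
  define l where "l = (LEAST k. take k x \<noteq> take k y)"
  have Pn: "take n x \<noteq> take n y" using assms by simp
  have ln: "l \<le> n" unfolding l_def using Pn by (rule Least_le)
  have Pl: "take l x \<noteq> take l y" unfolding l_def using Pn by (rule LeastI)
  have "(LEAST k. take k (x@[b]) \<noteq> take k (y@[c])) = l"
  proof (rule Least_equality)
    show "take l (x @ [b]) \<noteq> take l (y @ [c])" using Pl ln assms by simp
  next
    fix k assume k: "take k (x @ [b]) \<noteq> take k (y @ [c])"
    show "l \<le> k"
    proof (rule ccontr)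
      assume "\<not> l \<le> k"
      then have "k < l" by simp
      then have "take k x = take k y" unfolding l_def using not_less_Least by blast
      then show False using k \<open>k < l\<close> ln assms by simp
    qed
  qed
  moreover have "x @ [b] \<noteq> y @ [c]" using assms by simp
  ultimately show ?thesis using assms by (simp add: seq_dist_def l_def)
qed

lemma seq_dist_snoc_same:
  assumes "length x = n" "b \<noteq> c"
  shows "seq_dist (x@[b]) (x@[c]) = (1/2::real)^(Suc n)"
proof -
  have "(LEAST k. take k (x@[b]) \<noteq> take k (x@[c])) = Suc n"
  proof (rule Least_equality)
    show "take (Suc n) (x @ [b]) \<noteq> take (Suc n) (x @ [c])" using assms by simp
  next
    fix k assume k: "take k (x @ [b]) \<noteq> take k (x @ [c])"
    show "Suc n \<le> k"
    proof (rule ccontr)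
      assume "\<not> Suc n \<le> k" then have "k \<le> n" by simp
      then show False using k assms by simp
    qed
  qed
  then show ?thesis using assms by (simp add: seq_dist_def)
qed

lemma seq_dist_snoc_le:
  assumes "length x = n"
  shows "seq_dist (x@[b]) (x@[c]) \<le> (1/2::real)^(Suc n)"
  using seq_dist_snoc_same[OF assms] by (cases "b = c") (auto simp: seq_dist_def)

lemma twoN_Suc_decomp:
  assumes "X \<in> twoN (Suc n)"
  shows "X = butlast X @ [last X]" "butlast X \<in> twoN n"
  using assms by (auto simp: twoN_def) (metis append_butlast_last_id list.size(3) nat.distinct(1))

lemma Lip1_ext:
  assumes lip: "Lip1 n f" and g: "\<forall>X\<in>twoN (Suc n). g X = f (butlast X) @ [bt X]"
  shows "Lip1 (Suc n) g"
  unfolding Lip1_def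
proof (intro conjI ballI)
  fix X assume X: "X \<in> twoN (Suc n)"
  have "f (butlast X) \<in> twoN n" using lip twoN_Suc_decomp(2)[OF X] by (simp add: Lip1_def)
  then show "g X \<in> twoN (Suc n)" using g X by (simp add: twoN_def)
next
  fix X Y assume X: "X \<in> twoN (Suc n)" and Y: "Y \<in> twoN (Suc n)"
  define x y where "x = butlast X" and "y = butlast Y"
  have x: "x \<in> twoN n" and y: "y \<in> twoN n" using twoN_Suc_decomp(2) X Y x_def y_def by auto
  have Xe: "X = x @ [last X]" and Ye: "Y = y @ [last Y]" using twoN_Suc_decomp(1) X Y x_def y_def by auto
  have fx: "f x \<in> twoN n" and fy: "f y \<in> twoN n" using lip x y by (auto simp: Lip1_def)
  have dxy: "seq_dist (f x) (f y) \<le> seq_dist x y" using lip x y by (auto simp: Lip1_def)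
  have gX: "g X = f x @ [bt X]" and gY: "g Y = f y @ [bt Y]" using g X Y x_def y_def by auto
  show "seq_dist (g X) (g Y) \<le> seq_dist X Y"
  proof (cases "x = y")
    case True
    show ?thesis
    proof (cases "last X = last Y")
      case True
      then have "X = Y" using \<open>x = y\<close> by (subst Xe, subst Ye) simp
      then show ?thesis by (simp add: seq_dist_def)
    next
      case False
      have "seq_dist X Y = (1/2)^(Suc n)" using seq_dist_snoc_same[OF _ False, of x n] Xe Ye \<open>x = y\<close> x
        by (simp add: twoN_def)
      moreover have "seq_dist (g X) (g Y) \<le> (1/2)^(Suc n)" using gX gY True seq_dist_snoc_le fx
        by (simp add: twoN_def)
      ultimately show ?thesis by simp
    qed
  next
    case False
    have eq: "seq_dist X Y = seq_dist x y" using seq_dist_snoc_ne[OF _ _ False] Xe Ye x y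
      by (metis mem_Collect_eq twoN_def)
    show ?thesis
    proof (cases "f x = f y")
      case True
      have "seq_dist (g X) (g Y) \<le> (1/2)^(Suc n)" using gX gY True seq_dist_snoc_le fx
        by (simp add: twoN_def)
      also have "\<dots> \<le> (1/2)^n" by (simp add: power_decreasing)
      also have "\<dots> \<le> seq_dist x y" using seq_dist_lower False x y by (simp add: twoN_def)
      finally show ?thesis using eq by simp
    next
      case False
      have "seq_dist (g X) (g Y) = seq_dist (f x) (f y)" using seq_dist_snoc_ne[OF _ _ False] gX gY fx fy
        by (simp add: twoN_def)
      then show ?thesis using eq dxy by simp
    qed
  qed
qed

lemma Lip1_const:
  assumes "\<forall>X\<in>twoN N. g X = c" "c \<in> twoN N"
  shows "Lip1 N g"
  using assms by (simp add: Lip1_def seq_dist_def)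



lemma is_condD:
  assumes "is_cond p"
  shows "finite (cs p)" "finite (cv p)" "\<forall>i\<in>cs p. Lip1 (cn p) (cF p i)"
    "\<forall>a\<in>cv p. \<forall>b\<in>cv p. a \<noteq> b \<longrightarrow> crho p {a, b} \<in> cs p"
    "\<forall>a\<in>cv p. \<forall>a'\<in>cv p. \<forall>b\<in>cv p. a < a' \<and> a' < b \<longrightarrow> crho p {a, b} \<noteq> crho p {a', b}"
    "\<forall>a\<in>cv p. cgam p a \<in> twoN (cn p)" "inj_on (cgam p) (cv p)"
    "\<forall>a\<in>cv p. \<forall>b\<in>cv p. a < b \<longrightarrow> cgam p a = cF p (crho p {a, b}) (cgam p b)"
proof -
  note h = assms[unfolded is_cond_def]
  show "finite (cs p)" using h by (rule conjunct1)
  show "finite (cv p)" using h[THEN conjunct2] by (rule conjunct1)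
  show "\<forall>i\<in>cs p. Lip1 (cn p) (cF p i)" using h[THEN conjunct2, THEN conjunct2] by (rule conjunct1)
  show "\<forall>a\<in>cv p. \<forall>b\<in>cv p. a \<noteq> b \<longrightarrow> crho p {a, b} \<in> cs p"
    using h[THEN conjunct2, THEN conjunct2, THEN conjunct2] by (rule conjunct1)
  show "\<forall>a\<in>cv p. \<forall>a'\<in>cv p. \<forall>b\<in>cv p. a < a' \<and> a' < b \<longrightarrow> crho p {a, b} \<noteq> crho p {a', b}"
    using h[THEN conjunct2, THEN conjunct2, THEN conjunct2, THEN conjunct2] by (rule conjunct1)
  show "\<forall>a\<in>cv p. cgam p a \<in> twoN (cn p)"
    using h[THEN conjunct2, THEN conjunct2, THEN conjunct2, THEN conjunct2, THEN conjunct2] by (rule conjunct1)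
  show "inj_on (cgam p) (cv p)"
    using h[THEN conjunct2, THEN conjunct2, THEN conjunct2, THEN conjunct2, THEN conjunct2, THEN conjunct2] by (rule conjunct1)
  show "\<forall>a\<in>cv p. \<forall>b\<in>cv p. a < b \<longrightarrow> cgam p a = cF p (crho p {a, b}) (cgam p b)"
    using h[THEN conjunct2, THEN conjunct2, THEN conjunct2, THEN conjunct2, THEN conjunct2, THEN conjunct2, THEN conjunct2] by (rule conjunct1)
qed

lemma amalg:
  fixes p q :: "('a::linorder) cond"
  assumes cp: "is_cond p" and cq: "is_cond q"
    and nn: "cn q = cn p" and ss: "cs q = cs p"
    and FF: "\<forall>i\<in>cs p. \<forall>x\<in>twoN (cn p). cF q i x = cF p i x"
    and gg: "\<forall>a\<in>cv p \<inter> cv q. cgam q a = cgam p a"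
    and rr: "\<forall>a\<in>cv p \<inter> cv q. \<forall>b\<in>cv p \<inter> cv q. a \<noteq> b \<longrightarrow> crho q {a,b} = crho p {a,b}"
    and ini: "\<forall>r\<in>cv p \<inter> cv q. \<forall>z\<in>cv p \<union> cv q. z < r \<longrightarrow> z \<in> cv p \<inter> cv q"
  shows "compatible p q"
proof -
  define n where "n = cn p"
  define s where "s = cs p"
  define Vp where "Vp = cv p"
  define Vq where "Vq = cv q"
  define Pn where "Pn = Vp - Vq"
  define Qn where "Qn = Vq - Vp"
  define V where "V = Vp \<union> Vq"
  define E where "E = (\<lambda>(a,b). {a,b}) ` (Pn \<times> Qn)"
  have finp: "finite s" "finite Vp" "\<forall>i\<in>s. Lip1 n (cF p i)"
    "\<forall>a\<in>Vp. \<forall>b\<in>Vp. a \<noteq> b \<longrightarrow> crho p {a, b} \<in> s"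
    "\<forall>a\<in>Vp. \<forall>a'\<in>Vp. \<forall>b\<in>Vp. a < a' \<and> a' < b \<longrightarrow> crho p {a, b} \<noteq> crho p {a', b}"
    "\<forall>a\<in>Vp. cgam p a \<in> twoN n" "inj_on (cgam p) Vp"
    "\<forall>a\<in>Vp. \<forall>b\<in>Vp. a < b \<longrightarrow> cgam p a = cF p (crho p {a, b}) (cgam p b)"
    unfolding n_def s_def Vp_def by (fact is_condD[OF cp])+
  have finq: "finite Vq" "\<forall>i\<in>s. Lip1 n (cF q i)"
    "\<forall>a\<in>Vq. \<forall>b\<in>Vq. a \<noteq> b \<longrightarrow> crho q {a, b} \<in> s"
    "\<forall>a\<in>Vq. \<forall>a'\<in>Vq. \<forall>b\<in>Vq. a < a' \<and> a' < b \<longrightarrow> crho q {a, b} \<noteq> crho q {a', b}"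
    "\<forall>a\<in>Vq. cgam q a \<in> twoN n" "inj_on (cgam q) Vq"
    "\<forall>a\<in>Vq. \<forall>b\<in>Vq. a < b \<longrightarrow> cgam q a = cF q (crho q {a, b}) (cgam q b)"
    unfolding n_def s_def Vq_def nn[symmetric] ss[symmetric] by (fact is_condD[OF cq])+
  have FF': "\<forall>i\<in>s. \<forall>x\<in>twoN n. cF q i x = cF p i x" using FF unfolding n_def s_def .
  have gg': "\<forall>a\<in>Vp \<inter> Vq. cgam q a = cgam p a" using gg unfolding Vp_def Vq_def .
  have rr': "\<forall>a\<in>Vp \<inter> Vq. \<forall>b\<in>Vp \<inter> Vq. a \<noteq> b \<longrightarrow> crho q {a,b} = crho p {a,b}"
    using rr unfolding Vp_def Vq_def .
  have ini': "\<forall>r\<in>Vp \<inter> Vq. \<forall>z\<in>V. z < r \<longrightarrow> z \<in> Vp \<inter> Vq" using ini unfolding Vp_def Vq_def V_def .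
  have finPQ: "finite Pn" "finite Qn" unfolding Pn_def Qn_def using finp(2) finq(1) by auto
  have finE: "finite E" unfolding E_def using finPQ by (intro finite_imageI finite_cartesian_product)
  obtain enc :: "'a set \<Rightarrow> nat" where enc2: "inj_on enc E"
    using finite_imp_inj_to_nat_seg[OF finE] by (elim exE conjE) (erule that)
  obtain c0 where c0: "\<forall>i\<in>s. i < c0" using finp(1) finite_nat_set_iff_bounded by blast
  define idx where "idx e = c0 + enc e" for e
  have idx_inj: "inj_on idx E" using enc2 unfolding idx_def inj_on_def by simp
  have idx_ns: "\<And>e. idx e \<notin> s" using c0 unfolding idx_def by fastforce
  have Emem: "\<And>a b. {a,b} \<in> E \<longleftrightarrow> (a \<in> Pn \<and> b \<in> Qn) \<or> (a \<in> Qn \<and> b \<in> Pn)"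
    unfolding E_def by (auto simp: doubleton_eq_iff)
  have Eform: "\<And>e. e \<in> E \<Longrightarrow> \<exists>a\<in>Pn. \<exists>b\<in>Qn. e = {a,b}" unfolding E_def by auto
  have PQ: "Pn \<inter> Vq = {}" "Qn \<inter> Vp = {}" "Pn \<subseteq> V" "Qn \<subseteq> V" unfolding Pn_def Qn_def V_def by auto
  define G where "G a = (if a \<in> Vp then cgam p a @ [False] else if a \<in> Vq then cgam q a @ [True] else [])" for a
  define bitq where "bitq i y = (\<exists>\<beta>\<in>Qn. \<exists>\<alpha>\<in>Qn. cgam q \<beta> = y \<and> \<alpha> < \<beta> \<and> crho q {\<alpha>,\<beta>} = i)" for i y
  define Fr where "Fr i X = (if length X = Suc n then
      (if i \<in> s then cF p i (butlast X) @ [last X \<and> bitq i (butlast X)]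
       else if i \<in> idx ` E then G (Min (inv_into E idx i)) else []) else [])" for i X
  define Rho where "Rho e = (if e \<in> E then idx e
      else if (\<exists>a\<in>Vp. \<exists>b\<in>Vp. a\<noteq>b \<and> e = {a,b}) then crho p e
      else if (\<exists>a\<in>Vq. \<exists>b\<in>Vq. a \<noteq> b \<and> e = {a,b}) then crho q e else 0)" for e
  define r where "r = \<lparr>cn = Suc n, cs = s \<union> idx ` E, cv = V, cF = Fr, cgam = G, crho = Rho\<rparr>"
  have GV: "\<And>a. a \<in> V \<Longrightarrow> G a \<in> twoN (Suc n)"
    using finp(6) finq(5) unfolding G_def V_def twoN_def by auto
  have Rho_p: "\<And>a b. a \<in> Vp \<Longrightarrow> b \<in> Vp \<Longrightarrow> a \<noteq> b \<Longrightarrow> Rho {a,b} = crho p {a,b}"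
    unfolding Rho_def using Emem PQ by auto
  have Rho_q: "\<And>a b. a \<in> Vq \<Longrightarrow> b \<in> Vq \<Longrightarrow> a \<noteq> b \<Longrightarrow> Rho {a,b} = crho q {a,b}"
  proof -
    fix a b assume ab: "a \<in> Vq" "b \<in> Vq" "a \<noteq> b"
    have nE: "{a,b} \<notin> E" using Emem PQ ab by auto
    show "Rho {a,b} = crho q {a,b}"
    proof (cases "\<exists>c\<in>Vp. \<exists>d\<in>Vp. c\<noteq>d \<and> {a,b} = {c,d}")
      case True
      then have "a \<in> Vp" "b \<in> Vp" by (auto simp: doubleton_eq_iff)
      then show ?thesis using nE True rr' ab unfolding Rho_def by auto
    next
      case False
      then show ?thesis using nE ab unfolding Rho_def by auto
    qed
  qed
  have key: "\<And>x b. x < b \<Longrightarrow> x \<in> V \<Longrightarrow> b \<in> V \<Longrightarrow>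
      (b \<in> Vp \<and> x \<in> Vp \<and> Rho {x,b} = crho p {x,b}) \<or>
      (b \<in> Qn \<and> x \<in> Vq \<and> Rho {x,b} = crho q {x,b}) \<or>
      ({x,b} \<in> E \<and> Rho {x,b} = idx {x,b})"
  proof -
    fix x b assume xb: "x < b" "x \<in> V" "b \<in> V"
    show "?thesis x b"
    proof (cases "{x,b} \<in> E")
      case True then show ?thesis unfolding Rho_def by simp
    next
      case False
      show ?thesis
      proof (cases "b \<in> Vp")
        case True
        have "x \<in> Vp"
        proof (cases "b \<in> Vq")
          case True then show ?thesis using ini' xb \<open>b \<in> Vp\<close> by blast
        next
          case False
          then have "b \<in> Pn" using \<open>b \<in> Vp\<close> Pn_def by simp
          then show ?thesis using \<open>{x,b} \<notin> E\<close> Emem xb V_def Qn_def by auto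
        qed
        then show ?thesis using Rho_p True xb by auto
      next
        case False
        then have bQ: "b \<in> Qn" using xb V_def Qn_def by auto
        have "x \<in> Vq"
        proof (rule ccontr)
          assume "x \<notin> Vq" then have "x \<in> Pn" using xb V_def Pn_def by auto
          then show False using \<open>{x,b} \<notin> E\<close> Emem bQ by auto
        qed
        then show ?thesis using Rho_q bQ Qn_def xb by auto
      qed
    qed
  qed
  have invE: "\<And>e. e \<in> E \<Longrightarrow> inv_into E idx (idx e) = e" using idx_inj by (simp add: inv_into_f_f)
  have c4: "\<And>a b. a \<in> V \<Longrightarrow> b \<in> V \<Longrightarrow> a < b \<Longrightarrow> G a = Fr (Rho {a,b}) (G b)"
  proof -
    fix a b assume ab: "a \<in> V" "b \<in> V" "a < b"
    have lb: "length (G b) = Suc n" using GV ab by (simp add: twoN_def)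
    from key[OF ab(3,1,2)] show "G a = Fr (Rho {a,b}) (G b)"
    proof (elim disjE conjE)
      assume E1: "{a,b} \<in> E" and R1: "Rho {a,b} = idx {a,b}"
      have "Min {a,b} = a" using ab by (simp add: min_def less_imp_le)
      then show ?thesis using E1 R1 lb idx_ns invE unfolding Fr_def by simp
    next
      assume bp: "b \<in> Vp" and ap: "a \<in> Vp" and R1: "Rho {a,b} = crho p {a,b}"
      have i: "crho p {a,b} \<in> s" using finp(4) ab ap bp by auto
      have "cgam p a = cF p (crho p {a, b}) (cgam p b)" using finp(8) ab ap bp by auto
      then show ?thesis using R1 i lb ap bp unfolding Fr_def G_def by simp
    next
      assume bq: "b \<in> Qn" and aq: "a \<in> Vq" and R1: "Rho {a,b} = crho q {a,b}"
      define i where "i = crho q {a,b}"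
      have bq': "b \<in> Vq" "b \<notin> Vp" using bq Qn_def by auto
      have i: "i \<in> s" using finq(3) ab aq bq' i_def by auto
      have gbn: "cgam q b \<in> twoN n" using finq(5) bq' by auto
      have e1: "cF p i (cgam q b) = cgam q a" using finq(7) ab aq bq' FF' i gbn i_def by auto
      have Gb: "G b = cgam q b @ [True]" using bq' G_def by simp
      have bit: "bitq i (cgam q b) \<longleftrightarrow> a \<in> Qn"
      proof
        assume "bitq i (cgam q b)"
        then obtain \<beta> \<alpha> where w: "\<beta> \<in> Qn" "\<alpha> \<in> Qn" "cgam q \<beta> = cgam q b" "\<alpha> < \<beta>" "crho q {\<alpha>,\<beta>} = i"
          unfolding bitq_def by blast
        have "\<beta> = b" using w(1,3) bq' finq(6) Qn_def by (auto dest: inj_onD)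
        show "a \<in> Qn"
        proof (rule ccontr)
          assume "a \<notin> Qn"
          then have "a \<noteq> \<alpha>" using w by auto
          then have "a < \<alpha> \<or> \<alpha> < a" by auto
          then show False using finq(4) w \<open>\<beta> = b\<close> aq bq' ab i_def Qn_def
            by (metis DiffD1)
        qed
      next
        assume "a \<in> Qn"
        then show "bitq i (cgam q b)" unfolding bitq_def using bq ab i_def by blast
      qed
      show ?thesis
      proof (cases "a \<in> Vp")
        case True
        then have "a \<notin> Qn" using Qn_def by simp
        then show ?thesis using True R1 i lb Gb e1 bit gg' aq unfolding Fr_def G_def i_def by simp
      next
        case False
        then have "a \<in> Qn" using aq Qn_def by simp
        then show ?thesis using False R1 i lb Gb e1 bit aq unfolding Fr_def G_def i_def by simp
      qed
    qed
  qed
  have c2: "\<And>a a' b. a \<in> V \<Longrightarrow> a' \<in> V \<Longrightarrow> b \<in> V \<Longrightarrow> a < a' \<Longrightarrow> a' < b \<Longrightarrow> Rho {a,b} \<noteq> Rho {a',b}"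
  proof -
    fix a a' b assume h: "a \<in> V" "a' \<in> V" "b \<in> V" "a < a'" "a' < b"
    have ab: "a < b" using h by simp
    have ne: "{a,b} \<noteq> {a',b}" using h by (auto simp: doubleton_eq_iff)
    note k1 = key[OF ab h(1,3)] and k2 = key[OF h(5,2,3)]
    show "Rho {a,b} \<noteq> Rho {a',b}"
    proof -
      consider "b \<in> Vp" "a \<in> Vp" "a' \<in> Vp" "Rho {a,b} = crho p {a,b}" "Rho {a',b} = crho p {a',b}"
        | "b \<in> Qn" "a \<in> Vq" "a' \<in> Vq" "Rho {a,b} = crho q {a,b}" "Rho {a',b} = crho q {a',b}"
        | "{a,b} \<in> E" "Rho {a,b} = idx {a,b}" "{a',b} \<in> E" "Rho {a',b} = idx {a',b}"
        | "{a,b} \<in> E" "Rho {a,b} = idx {a,b}" "Rho {a',b} \<in> s"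
        | "{a',b} \<in> E" "Rho {a',b} = idx {a',b}" "Rho {a,b} \<in> s"
      proof -
        have b1: "b \<in> Vp \<Longrightarrow> b \<in> Qn \<Longrightarrow> False" using PQ by blast
        have ps: "\<And>x. x \<in> Vp \<Longrightarrow> x < b \<Longrightarrow> b \<in> Vp \<Longrightarrow> crho p {x,b} \<in> s" using finp(4) by auto
        have qs: "\<And>x. x \<in> Vq \<Longrightarrow> x < b \<Longrightarrow> b \<in> Qn \<Longrightarrow> crho q {x,b} \<in> s"
          using finq(3) Qn_def by auto
        show thesis using k1 k2 b1 ps[of a] ps[of a'] qs[of a] qs[of a'] h ab that by metis
      qed
      then show ?thesis
      proof cases
        case 1 then show ?thesis using finp(5) h by auto
      next
        case 2 then show ?thesis using finq(4) h Qn_def by auto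
      next
        case 3 then show ?thesis using idx_inj ne by (metis inj_onD)
      next
        case 4 then show ?thesis using idx_ns by metis
      next
        case 5 then show ?thesis using idx_ns by metis
      qed
    qed
  qed
  have rho_in: "\<And>a b. a \<in> V \<Longrightarrow> b \<in> V \<Longrightarrow> a \<noteq> b \<Longrightarrow> Rho {a,b} \<in> s \<union> idx ` E"
  proof -
    have one: "Rho {a,b} \<in> s \<union> idx ` E" if "a < b" "a \<in> V" "b \<in> V" for a b
    proof -
      have ps: "a \<in> Vp \<Longrightarrow> b \<in> Vp \<Longrightarrow> crho p {a,b} \<in> s" using finp(4) that by auto
      have qs: "a \<in> Vq \<Longrightarrow> b \<in> Qn \<Longrightarrow> crho q {a,b} \<in> s" using finq(3) Qn_def that by auto
      show ?thesis using key[OF that] ps qs by auto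
    qed
    fix a b assume "a \<in> V" "b \<in> V" "a \<noteq> b"
    then show "Rho {a,b} \<in> s \<union> idx ` E"
      using one[of a b] one[of b a] by (metis insert_commute linorder_neq_iff)
  qed
  have MinE: "\<And>e. e \<in> E \<Longrightarrow> Min e \<in> V"
  proof -
    fix e assume "e \<in> E"
    then obtain a b where "a \<in> Pn" "b \<in> Qn" "e = {a,b}" using Eform by blast
    then show "Min e \<in> V" using PQ by (auto simp: min_def)
  qed
  have lip: "\<forall>i\<in>s \<union> idx ` E. Lip1 (Suc n) (Fr i)"
  proof
    fix i assume i: "i \<in> s \<union> idx ` E"
    show "Lip1 (Suc n) (Fr i)"
    proof (cases "i \<in> s")
      case True
      show ?thesis
      proof (rule Lip1_ext[where bt = "\<lambda>X. last X \<and> bitq i (butlast X)"])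
        show "Lip1 n (cF p i)" using finp(3) True by auto
        show "\<forall>X\<in>twoN (Suc n). Fr i X = cF p i (butlast X) @ [last X \<and> bitq i (butlast X)]"
          using True unfolding Fr_def twoN_def by auto
      qed
    next
      case False
      then obtain e where e: "e \<in> E" "i = idx e" using i by blast
      show ?thesis
      proof (rule Lip1_const)
        show "\<forall>X\<in>twoN (Suc n). Fr i X = G (Min e)"
          using e False invE unfolding Fr_def twoN_def by auto
        show "G (Min e) \<in> twoN (Suc n)" using GV MinE e by auto
      qed
    qed
  qed
  have Ginj: "inj_on G V"
  proof (rule inj_onI)
    fix a b assume ab: "a \<in> V" "b \<in> V" "G a = G b"
    show "a = b"
    proof (cases "a \<in> Vp")
      case True
      show ?thesis
      proof (cases "b \<in> Vp")
        case True
        then show ?thesis using \<open>a \<in> Vp\<close> ab finp(7) unfolding G_def by (auto dest: inj_onD)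
      next
        case False
        then show ?thesis using \<open>a \<in> Vp\<close> ab unfolding G_def V_def by auto
      qed
    next
      case False
      then have aq: "a \<in> Vq" using ab V_def by auto
      show ?thesis
      proof (cases "b \<in> Vp")
        case True
        then show ?thesis using False ab aq unfolding G_def by auto
      next
        case False
        then have "b \<in> Vq" using ab V_def by auto
        then show ?thesis using False \<open>a \<notin> Vp\<close> aq ab finq(6) unfolding G_def by (auto dest: inj_onD)
      qed
    qed
  qed
  have N1: "\<forall>i. i \<notin> s \<union> idx ` E \<longrightarrow> Fr i = (\<lambda>_. [])" unfolding Fr_def by auto
  have N2: "\<forall>i\<in>s \<union> idx ` E. \<forall>x. x \<notin> twoN (Suc n) \<longrightarrow> Fr i x = []" unfolding Fr_def twoN_def by auto
  have N3: "\<forall>a. a \<notin> V \<longrightarrow> G a = []" unfolding G_def V_def by auto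
  have N4: "\<forall>e. (\<not> (\<exists>a\<in>V. \<exists>b\<in>V. a \<noteq> b \<and> e = {a, b})) \<longrightarrow> Rho e = 0"
  proof (intro allI impI)
    fix e assume ne: "\<not> (\<exists>a\<in>V. \<exists>b\<in>V. a \<noteq> b \<and> e = {a, b})"
    have "e \<notin> E"
    proof
      assume "e \<in> E"
      then obtain a b where "a \<in> Pn" "b \<in> Qn" "e = {a,b}" using Eform by blast
      moreover have "a \<noteq> b" using \<open>a \<in> Pn\<close> \<open>b \<in> Qn\<close> PQ(1) by (auto simp: Qn_def)
      ultimately show False using ne PQ(3,4) by blast
    qed
    moreover have "\<not> (\<exists>a\<in>Vp. \<exists>b\<in>Vp. a\<noteq>b \<and> e = {a,b})" using ne unfolding V_def by blast
    moreover have "\<not> (\<exists>a\<in>Vq. \<exists>b\<in>Vq. a\<noteq>b \<and> e = {a,b})" using ne unfolding V_def by blast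
    ultimately show "Rho e = 0" unfolding Rho_def by (simp only: if_False) 
  qed
  have finr: "finite (s \<union> idx ` E)" "finite V" using finp(1) finE finp(2) finq(1) V_def by auto
  have G2: "\<forall>a\<in>V. G a \<in> twoN (Suc n)" using GV by auto
  have R2: "\<forall>a\<in>V. \<forall>b\<in>V. a \<noteq> b \<longrightarrow> Rho {a, b} \<in> s \<union> idx ` E" using rho_in by auto
  have C2: "\<forall>a\<in>V. \<forall>a'\<in>V. \<forall>b\<in>V. a < a' \<and> a' < b \<longrightarrow> Rho {a, b} \<noteq> Rho {a', b}" using c2 by auto
  have C4: "\<forall>a\<in>V. \<forall>b\<in>V. a < b \<longrightarrow> G a = Fr (Rho {a, b}) (G b)" using c4 by auto
  have isr: "is_cond r"
    unfolding is_cond_def r_def cond.select_convs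
    by (intro conjI finr lip R2 C2 G2 Ginj C4 N1 N2 N3 N4)
  have lep: "cond_le p r"
    unfolding cond_le_def r_def cond.select_convs n_def[symmetric] s_def[symmetric] Vp_def[symmetric]
  proof (intro conjI)
    show "n \<le> Suc n" by simp
    show "s \<subseteq> s \<union> idx ` E" by auto
    show "Vp \<subseteq> V" using V_def by auto
    show "\<forall>i\<in>s. \<forall>x\<in>twoN (Suc n). take n (Fr i x) = cF p i (take n x)"
    proof (intro ballI)
      fix i X assume i: "i \<in> s" and X: "X \<in> twoN (Suc n)"
      have bX: "butlast X \<in> twoN n" using twoN_Suc_decomp(2)[OF X] .
      have "cF p i (butlast X) \<in> twoN n" using finp(3) i bX by (auto simp: Lip1_def)
      moreover have "take n X = butlast X" using X by (simp add: twoN_def butlast_conv_take)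
      ultimately show "take n (Fr i X) = cF p i (take n X)" using i X unfolding Fr_def twoN_def by simp
    qed
    show "\<forall>a\<in>Vp. take n (G a) = cgam p a" using finp(6) unfolding G_def twoN_def by auto
    show "\<forall>a\<in>Vp. \<forall>b\<in>Vp. a \<noteq> b \<longrightarrow> Rho {a, b} = crho p {a, b}" using Rho_p by auto
  qed
  have leq: "cond_le q r"
    unfolding cond_le_def r_def cond.select_convs nn ss n_def[symmetric] s_def[symmetric] Vq_def[symmetric]
  proof (intro conjI)
    show "n \<le> Suc n" by simp
    show "s \<subseteq> s \<union> idx ` E" by auto
    show "Vq \<subseteq> V" using V_def by auto
    show "\<forall>i\<in>s. \<forall>x\<in>twoN (Suc n). take n (Fr i x) = cF q i (take n x)"
    proof (intro ballI)
      fix i X assume i: "i \<in> s" and X: "X \<in> twoN (Suc n)"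
      have bX: "butlast X \<in> twoN n" using twoN_Suc_decomp(2)[OF X] .
      have "cF p i (butlast X) \<in> twoN n" using finp(3) i bX by (auto simp: Lip1_def)
      moreover have tX: "take n X = butlast X" using X by (simp add: twoN_def butlast_conv_take)
      moreover have "cF q i (butlast X) = cF p i (butlast X)" using FF' i bX by auto
      ultimately show "take n (Fr i X) = cF q i (take n X)" using i X unfolding Fr_def twoN_def by simp
    qed
    show "\<forall>a\<in>Vq. take n (G a) = cgam q a" using finp(6) finq(5) gg' unfolding G_def twoN_def by auto
    show "\<forall>a\<in>Vq. \<forall>b\<in>Vq. a \<noteq> b \<longrightarrow> Rho {a, b} = crho q {a, b}" using Rho_q by auto
  qed
  show ?thesis unfolding compatible_def using isr lep leq by blast
qed


lemma list_delta_facts: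
  fixes Lp Lq :: "('a::linorder) list"
  assumes sp: "sorted_wrt (<) Lp" and sq: "sorted_wrt (<) Lq"
    and tk: "take m Lp = take m Lq" and dj: "set (drop m Lp) \<inter> set (drop m Lq) = {}"
  shows "set Lp \<inter> set Lq = set (take m Lp)"
    "\<forall>r\<in>set Lp \<inter> set Lq. \<forall>z\<in>set Lp \<union> set Lq. z < r \<longrightarrow> z \<in> set Lp \<inter> set Lq"
proof -
  have ep: "set Lp = set (take m Lp) \<union> set (drop m Lp)" by (metis append_take_drop_id set_append)
  have eq: "set Lq = set (take m Lp) \<union> set (drop m Lq)" using tk by (metis append_take_drop_id set_append)
  show I: "set Lp \<inter> set Lq = set (take m Lp)" using ep eq dj by blast
  have op: "\<forall>x\<in>set (take m Lp). \<forall>y\<in>set (drop m Lp). x < y"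
    using sp by (metis append_take_drop_id sorted_wrt_append)
  have oq: "\<forall>x\<in>set (take m Lp). \<forall>y\<in>set (drop m Lq). x < y"
    using sq tk by (metis append_take_drop_id sorted_wrt_append)
  show "\<forall>r\<in>set Lp \<inter> set Lq. \<forall>z\<in>set Lp \<union> set Lq. z < r \<longrightarrow> z \<in> set Lp \<inter> set Lq"
  proof (intro ballI impI)
    fix r z assume r: "r \<in> set Lp \<inter> set Lq" and z: "z \<in> set Lp \<union> set Lq" and zr: "z < r"
    have rT: "r \<in> set (take m Lp)" using r I by simp
    show "z \<in> set Lp \<inter> set Lq"
    proof (rule ccontr)
      assume "z \<notin> set Lp \<inter> set Lq"
      then have "z \<in> set (drop m Lp) \<or> z \<in> set (drop m Lq)" using z ep eq I by blast
      then have "r < z" using op oq rT by blast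
      then show False using zr by simp
    qed
  qed
qed

definition Lv :: "('a::linorder) cond \<Rightarrow> 'a list" where
  "Lv p = sorted_list_of_set (cv p)"

definition tau :: "('a::linorder) cond \<Rightarrow> nat \<times> nat list \<times> bool list list list \<times> bool list list \<times> nat list list" where
  "tau p = (cn p, sorted_list_of_set (cs p),
     map (\<lambda>i. map (cF p i) (List.n_lists (cn p) [True,False])) (sorted_list_of_set (cs p)),
     map (cgam p) (Lv p),
     map (\<lambda>j. map (\<lambda>i. crho p {Lv p ! i, Lv p ! j}) [0..<length (Lv p)]) [0..<length (Lv p)])"

lemma tau_compat:
  fixes p q :: "('a::linorder) cond"
  assumes cp: "is_cond p" and cq: "is_cond q" and t: "tau p = tau q"
    and tk: "take m (Lv p) = take m (Lv q)" and dj: "set (drop m (Lv p)) \<inter> set (drop m (Lv q)) = {}"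
  shows "compatible p q"
proof -
  have fp: "finite (cs p)" "finite (cv p)" using is_condD[OF cp] by auto
  have fq: "finite (cs q)" "finite (cv q)" using is_condD[OF cq] by auto
  have nn: "cn q = cn p" using t by (simp add: tau_def)
  have sl: "sorted_list_of_set (cs p) = sorted_list_of_set (cs q)" using t by (simp add: tau_def)
  have ss: "cs q = cs p" using sl fp fq by (metis set_sorted_list_of_set)
  have Fm: "map (\<lambda>i. map (cF p i) (List.n_lists (cn p) [True,False])) (sorted_list_of_set (cs p)) =
            map (\<lambda>i. map (cF q i) (List.n_lists (cn p) [True,False])) (sorted_list_of_set (cs p))"
    using t nn sl by (simp add: tau_def)
  have FF: "\<forall>i\<in>cs p. \<forall>x\<in>twoN (cn p). cF q i x = cF p i x"
  proof (intro ballI)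
    fix i x assume i: "i \<in> cs p" and x: "x \<in> twoN (cn p)"
    have "i \<in> set (sorted_list_of_set (cs p))" using i fp by simp
    then have "map (cF p i) (List.n_lists (cn p) [True,False]) = map (cF q i) (List.n_lists (cn p) [True,False])"
      using Fm by (simp add: map_eq_conv)
    moreover have "x \<in> set (List.n_lists (cn p) [True,False])"
      using x by (auto simp: set_n_lists twoN_def)
    ultimately show "cF q i x = cF p i x" by (simp add: map_eq_conv)
  qed
  define Lp where "Lp = Lv p"
  define Lq where "Lq = Lv q"
  have setp: "set Lp = cv p" and setq: "set Lq = cv q" using fp fq by (simp_all add: Lp_def Lq_def Lv_def)
  have sp: "sorted_wrt (<) Lp" and sq: "sorted_wrt (<) Lq"
    unfolding Lp_def Lq_def Lv_def by simp_all
  have gm: "map (cgam p) Lp = map (cgam q) Lq" using t by (simp add: tau_def Lp_def Lq_def)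
  then have len: "length Lp = length Lq" by (metis length_map)
  have rm: "map (\<lambda>j. map (\<lambda>i. crho p {Lp ! i, Lp ! j}) [0..<length Lp]) [0..<length Lp] =
            map (\<lambda>j. map (\<lambda>i. crho q {Lq ! i, Lq ! j}) [0..<length Lp]) [0..<length Lp]"
    using t len by (simp add: tau_def Lp_def Lq_def)
  have tk': "take m Lp = take m Lq" and dj': "set (drop m Lp) \<inter> set (drop m Lq) = {}"
    using tk dj by (simp_all add: Lp_def Lq_def)
  note LD = list_delta_facts[OF sp sq tk' dj']
  have inT: "\<And>a. a \<in> cv p \<inter> cv q \<Longrightarrow> \<exists>i. i < length Lp \<and> Lp ! i = a \<and> Lq ! i = a"
  proof -
    fix a assume "a \<in> cv p \<inter> cv q"
    then have "a \<in> set (take m Lp)" using LD(1) setp setq by blast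
    then obtain i where i: "i < length (take m Lp)" "take m Lp ! i = a" by (auto simp: in_set_conv_nth)
    have "take m Lq ! i = a" using i tk' by simp
    then show "\<exists>i. i < length Lp \<and> Lp ! i = a \<and> Lq ! i = a" using i len by auto
  qed
  have gg: "\<forall>a\<in>cv p \<inter> cv q. cgam q a = cgam p a"
  proof
    fix a assume "a \<in> cv p \<inter> cv q"
    then obtain i where i: "i < length Lp" "Lp ! i = a" "Lq ! i = a" using inT by blast
    have "map (cgam p) Lp ! i = map (cgam q) Lq ! i" using gm by simp
    then show "cgam q a = cgam p a" using i len by simp
  qed
  have rr: "\<forall>a\<in>cv p \<inter> cv q. \<forall>b\<in>cv p \<inter> cv q. a \<noteq> b \<longrightarrow> crho q {a,b} = crho p {a,b}"
  proof (intro ballI impI)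
    fix a b assume a: "a \<in> cv p \<inter> cv q" and b: "b \<in> cv p \<inter> cv q"
    obtain i where i: "i < length Lp" "Lp ! i = a" "Lq ! i = a" using inT a by blast
    obtain j where j: "j < length Lp" "Lp ! j = b" "Lq ! j = b" using inT b by blast
    have e: "(map (\<lambda>j. map (\<lambda>i. crho p {Lp ! i, Lp ! j}) [0..<length Lp]) [0..<length Lp]) ! j ! i =
          (map (\<lambda>j. map (\<lambda>i. crho q {Lq ! i, Lq ! j}) [0..<length Lp]) [0..<length Lp]) ! j ! i"
      by (subst rm) (rule refl)
    have "crho p {Lp ! i, Lp ! j} = crho q {Lq ! i, Lq ! j}" using e i(1) j(1) by (simp only: nth_map length_map length_upt nth_upt) simp
    then show "crho q {a,b} = crho p {a,b}" using i j by simp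
  qed
  have ini: "\<forall>r\<in>cv p \<inter> cv q. \<forall>z\<in>cv p \<union> cv q. z < r \<longrightarrow> z \<in> cv p \<inter> cv q"
    using LD(2) unfolding setp setq .
  show ?thesis by (rule amalg[OF cp cq nn ss FF gg rr ini])
qed

theorem lemma3p2:
  assumes "\<not> countable (UNIV :: ('a::wellorder) set)"
    and "\<forall>a::'a. countable {x. x < a}"
  shows "\<forall>A :: 'a cond set. antichain A \<longrightarrow> countable A"
proof (intro allI impI)
  fix A :: "'a cond set" assume ac: "antichain A"
  show "countable A"
  proof (rule ccontr)
    assume unc: "uncountable A"
    have "\<exists>t. uncountable {p\<in>A. tau p = t}"
    proof (rule ccontr)
      assume "\<not> (\<exists>t. uncountable {p\<in>A. tau p = t})"
      then have "countable (\<Union>t. {p\<in>A. tau p = t})" by auto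
      moreover have "A \<subseteq> (\<Union>t. {p\<in>A. tau p = t})" by auto
      ultimately show False using unc countable_subset by blast
    qed
    then obtain t where B: "uncountable {p\<in>A. tau p = t}" by blast
    have condA: "\<And>p. p \<in> A \<Longrightarrow> is_cond p" using ac by (auto simp: antichain_def)
    define k where "k = length (fst (snd (snd (snd t))))"
    have "\<forall>p\<in>{p\<in>A. tau p = t}. sorted_wrt (<) (Lv p) \<and> length (Lv p) = k"
    proof
      fix p assume "p \<in> {p\<in>A. tau p = t}"
      then have "tau p = t" by simp
      then show "sorted_wrt (<) (Lv p) \<and> length (Lv p) = k"
        unfolding k_def by (auto simp: tau_def Lv_def)
    qed
    from delta[OF assms(2) B this] obtain p q m where pq: "p \<in> A" "tau p = t" "q \<in> A" "tau q = t" "p \<noteq> q"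
      "take m (Lv p) = take m (Lv q)" "set (drop m (Lv p)) \<inter> set (drop m (Lv q)) = {}" by auto
    have "compatible p q" using tau_compat[OF condA[OF pq(1)] condA[OF pq(3)] _ pq(6,7)] pq(2,4) by simp
    then show False using ac pq by (auto simp: antichain_def)
  qed
qed

end
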